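(* Let $r\geq 3$ and $k\geq 2$, and let $G$ be an $r$-graph that is $(rk-2k+2,k)$-free. Let $u,v$ be distinct vertices of $G$ and let $F_1,\dots,F_s\subseteq G$ be pairwise edge-disjoint subgraphs. Then the sumset $\sum_{i=1}^s C_{F_i}(uv)=\{\sum_{i=1}^s m_i : m_i\in C_{F_i}(uv)\}$ does not contain $k$.
   Context: An $r$-graph is an $r$-uniform hypergraph; subgraphs are identified with their edge sets. An $(s,k)$-configuration is an $r$-graph with exactly $k$ edges and at most $s$ vertices; $(s,k)$-free means containing no such subgraph. For an $r$-graph $F$ and distinct vertices $x,y$, $C_F(xy)$ is the set of integers $i\geq 0$ for which there exist $i$ distinct edges $X_1,\dots,X_i$ of $F$ with $|\{x,y\}\cup\bigcup_{j=1}^iX_j|\le ri-2i+2$ (so $0\in C_F(xy)$ always). *)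

theory Defs
  imports Main
begin

definition r_graph :: "nat \<Rightarrow> 'a set set \<Rightarrow> bool" where
  "r_graph r G \<longleftrightarrow> (\<forall>e\<in>G. card e = r)"

definition configuration :: "nat \<Rightarrow> nat \<Rightarrow> 'a set set \<Rightarrow> bool" where
  "configuration s k H \<longleftrightarrow> finite H \<and> card H = k \<and> finite (\<Union>H) \<and> card (\<Union>H) \<le> s"

definition sk_free :: "nat \<Rightarrow> nat \<Rightarrow> 'a set set \<Rightarrow> bool" where
  "sk_free s k G \<longleftrightarrow> \<not> (\<exists>H\<subseteq>G. configuration s k H)"

definition C_set :: "nat \<Rightarrow> 'a set set \<Rightarrow> 'a \<Rightarrow> 'a \<Rightarrow> nat set" where
  "C_set r F x y = {i. \<exists>X\<subseteq>F. finite X \<and> card X = i \<and>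
      finite ({x, y} \<union> \<Union>X) \<and> card ({x, y} \<union> \<Union>X) \<le> r * i - 2 * i + 2}"

end

theory Submission
  imports Defs
begin

lemma card_union_uv:
  assumes "finite S" "finite T" "{u,v} \<subseteq> S" "{u,v} \<subseteq> T" "u \<noteq> v"
  shows "card (S \<union> T) + 2 \<le> card S + card T"
proof -
  have "S \<union> T = S \<union> (T - {u,v})" using assms by auto
  hence "card (S \<union> T) \<le> card S + card (T - {u,v})" by (metis card_Un_le)
  moreover have "card (T - {u,v}) = card T - 2" using assms by (simp add: card_Diff_subset)
  moreover have "card T \<ge> 2" using assms by (metis card_2_iff card_mono)
  ultimately show ?thesis by linarith
qed

lemma bound_ind:
  fixes X :: "nat \<Rightarrow> 'a set set"
  assumes fin: "\<And>i. i < n \<Longrightarrow> finite ({u,v} \<union> \<Union>(X i))"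
    and bd: "\<And>i. i < n \<Longrightarrow> card ({u,v} \<union> \<Union>(X i)) \<le> c i + 2"
    and uv: "u \<noteq> v"
  shows "finite ({u,v} \<union> (\<Union>i<n. \<Union>(X i))) \<and> card ({u,v} \<union> (\<Union>i<n. \<Union>(X i))) \<le> (\<Sum>i<n. c i) + 2"
  using fin bd
proof (induction n)
  case 0
  then show ?case using uv by simp
next
  case (Suc n)
  let ?S = "{u,v} \<union> (\<Union>i<n. \<Union>(X i))"
  let ?T = "{u,v} \<union> \<Union>(X n)"
  have IH: "finite ?S \<and> card ?S \<le> (\<Sum>i<n. c i) + 2" using Suc by auto
  have eq: "{u,v} \<union> (\<Union>i<Suc n. \<Union>(X i)) = ?S \<union> ?T" by (auto simp: lessThan_Suc)
  have fT: "finite ?T" using Suc by auto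
  have cT: "card ?T \<le> c n + 2" using Suc by auto
  have "card (?S \<union> ?T) + 2 \<le> card ?S + card ?T"
    by (rule card_union_uv) (use IH fT uv in auto)
  thus ?case using IH fT cT eq by simp
qed

theorem lemma5p1:
  fixes r k s :: nat and G :: "'a set set" and u v :: 'a and F :: "nat \<Rightarrow> 'a set set"
  assumes "r \<ge> 3" and "k \<ge> 2"
    and "finite G" and "r_graph r G"
    and "sk_free (r * k - 2 * k + 2) k G"
    and "u \<noteq> v"
    and "\<And>i. i < s \<Longrightarrow> F i \<subseteq> G"
    and "\<And>i j. i < s \<Longrightarrow> j < s \<Longrightarrow> i \<noteq> j \<Longrightarrow> F i \<inter> F j = {}"
  shows "k \<notin> {(\<Sum>i<s. m i) | m. \<forall>i<s. m i \<in> C_set r (F i) u v}"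
proof
  assume "k \<in> {(\<Sum>i<s. m i) | m. \<forall>i<s. m i \<in> C_set r (F i) u v}"
  then obtain m where k: "k = (\<Sum>i<s. m i)" and mC: "\<forall>i<s. m i \<in> C_set r (F i) u v" by blast
  have "\<forall>i<s. \<exists>Y. Y \<subseteq> F i \<and> finite Y \<and> card Y = m i \<and>
      finite ({u, v} \<union> \<Union>Y) \<and> card ({u, v} \<union> \<Union>Y) \<le> r * m i - 2 * m i + 2"
    using mC by (simp add: C_set_def)
  then obtain X where X: "\<And>i. i < s \<Longrightarrow> X i \<subseteq> F i \<and> finite (X i) \<and> card (X i) = m i \<and>
      finite ({u, v} \<union> \<Union>(X i)) \<and> card ({u, v} \<union> \<Union>(X i)) \<le> r * m i - 2 * m i + 2"
    by metis
  define Y where "Y = (\<Union>i<s. X i)"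
  have YG: "Y \<subseteq> G" using X assms(7) unfolding Y_def by blast
  have finY: "finite Y" using YG assms(3) finite_subset by blast
  have "card Y = (\<Sum>i<s. card (X i))" unfolding Y_def
    by (rule card_UN_disjoint) (use X assms(8) in blast)+
  also have "\<dots> = k" using X k by simp
  finally have cY: "card Y = k" .
  have b: "finite ({u,v} \<union> (\<Union>i<s. \<Union>(X i))) \<and> card ({u,v} \<union> (\<Union>i<s. \<Union>(X i))) \<le> (\<Sum>i<s. r * m i - 2 * m i) + 2"
    by (rule bound_ind) (use X assms(6) in auto)
  have "(\<Sum>i<s. r * m i - 2 * m i) = (\<Sum>i<s. (r - 2) * m i)" by (simp add: diff_mult_distrib)
  also have "\<dots> = (r - 2) * k" using k by (simp add: sum_distrib_left)
  also have "\<dots> = r * k - 2 * k" by (simp add: diff_mult_distrib)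
  finally have se: "(\<Sum>i<s. r * m i - 2 * m i) = r * k - 2 * k" .
  have UY: "\<Union>Y = (\<Union>i<s. \<Union>(X i))" unfolding Y_def by blast
  have "\<Union>Y \<subseteq> {u,v} \<union> (\<Union>i<s. \<Union>(X i))" using UY by blast
  hence "finite (\<Union>Y) \<and> card (\<Union>Y) \<le> r * k - 2 * k + 2"
    using b se by (metis card_mono finite_subset le_trans)
  hence "configuration (r * k - 2 * k + 2) k Y" using finY cY by (simp add: configuration_def)
  thus False using assms(5) YG by (auto simp: sk_free_def)
qed

end
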